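(* For every $\delta>0$ there exist $n\ge1$, a pool $\mathcal D=\{(p_i,t_i)\}_{i=1}^n$ with $p_i\in[0,1]$, $t_i>0$, and a budget $T>0$, such that the greedy backward selection strategy based on the usefulness values $u_i=p_i/t_i$ (defined in the context) outputs an ensemble $S$ with majority-voting accuracy $q(S)\le 1/2+\delta$, while there is an index set $\mathcal L\subseteq\{1,\dots,n\}$ with $\sum_{i\in\mathcal L}t_i\le T$ and $q(\mathcal L)\ge 1-\delta$; i.e., its error (optimal constrained accuracy minus output accuracy) can be arbitrarily close to $1/2$.
   Context: A pool consists of candidate members $i=1,\dots,n$, each with accuracy $p_i\in[0,1]$ and cost $t_i>0$; a budget $T>0$ is given; the usefulness of member $i$ is $u_i=p_i/t_i$. For a nonempty index set $\mathcal L$ with $|\mathcal L|=\ell$, the (majority voting) accuracy is $q(\mathcal L)=\sum_{k=\lfloor \ell/2\rfloor+1}^{\ell}\sum_{\mathcal I\subseteq\mathcal L,|\mathcal I|=k}\prod_{i\in\mathcal I}p_i\prod_{j\in\mathcal L\setminus\mathcal I}(1-p_j)$. Greedy backward selection by usefulness: start with $S=\{1,\dots,n\}$; while $\sum_{i\in S}t_i>T$ and $|S|>1$, remove from $S$ a member with smallest usefulness $u_i$; afterwards, while $|S|>1$ and removing a member of smallest usefulness strictly increases $q(S)$, remove it; output $S$. *)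

theory Defs
  imports Complex_Main
begin

definition usefulness :: "(nat \<Rightarrow> real) \<Rightarrow> (nat \<Rightarrow> real) \<Rightarrow> nat \<Rightarrow> real" where
  "usefulness p t i = p i / t i"

definition mv_acc :: "(nat \<Rightarrow> real) \<Rightarrow> nat set \<Rightarrow> real" where
  "mv_acc p L = (\<Sum>k = card L div 2 + 1 .. card L.
      \<Sum>I\<in>{I. I \<subseteq> L \<and> card I = k}. (\<Prod>i\<in>I. p i) * (\<Prod>j\<in>L - I. 1 - p j))"

definition min_useful :: "(nat \<Rightarrow> real) \<Rightarrow> (nat \<Rightarrow> real) \<Rightarrow> nat set \<Rightarrow> nat \<Rightarrow> bool" where
  "min_useful p t S i \<longleftrightarrow> i \<in> S \<and> (\<forall>j\<in>S. usefulness p t i \<le> usefulness p t j)"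

text \<open>Phase 1 (budget phase): phase1 p t T S S' means that the loop started in state S
  can terminate in state S' (for some tie-breaking).\<close>
inductive phase1 :: "(nat \<Rightarrow> real) \<Rightarrow> (nat \<Rightarrow> real) \<Rightarrow> real \<Rightarrow> nat set \<Rightarrow> nat set \<Rightarrow> bool"
  for p t T where
  p1_stop: "\<not> (sum t S > T \<and> card S > 1) \<Longrightarrow> phase1 p t T S S"
| p1_step: "sum t S > T \<Longrightarrow> card S > 1 \<Longrightarrow> min_useful p t S i \<Longrightarrow>
            phase1 p t T (S - {i}) S' \<Longrightarrow> phase1 p t T S S'"

text \<open>To cover every tie-breaking rule, the loop may stop
  whenever |S| <= 1 or some smallest-usefulness member's removal does not strictly
  increase q, and it may continue by removing any smallest-usefulness member
  whose removal strictly increases q.\<close>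
inductive phase2 :: "(nat \<Rightarrow> real) \<Rightarrow> (nat \<Rightarrow> real) \<Rightarrow> nat set \<Rightarrow> nat set \<Rightarrow> bool"
  for p t where
  p2_stop: "card S \<le> 1 \<or> (\<exists>i. min_useful p t S i \<and> \<not> mv_acc p (S - {i}) > mv_acc p S)
            \<Longrightarrow> phase2 p t S S"
| p2_step: "card S > 1 \<Longrightarrow> min_useful p t S i \<Longrightarrow> mv_acc p (S - {i}) > mv_acc p S \<Longrightarrow>
            phase2 p t (S - {i}) S' \<Longrightarrow> phase2 p t S S'"

definition greedy_output :: "nat \<Rightarrow> (nat \<Rightarrow> real) \<Rightarrow> (nat \<Rightarrow> real) \<Rightarrow> real \<Rightarrow> nat set \<Rightarrow> bool" where
  "greedy_output n p t T S \<longleftrightarrow> (\<exists>S1. phase1 p t T {1..n} S1 \<and> phase2 p t S1 S)"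

end

theory Submission
  imports Defs
begin

lemma subsets_card1_single: "{I. I \<subseteq> {i::nat} \<and> card I = 1} = {{i}}"
proof -
  have "I \<subseteq> {i} \<and> card I = 1 \<longleftrightarrow> I = {i}" for I
  proof
    assume h: "I \<subseteq> {i} \<and> card I = 1"
    then have "I \<noteq> {}" by auto
    with h show "I = {i}" by blast
  qed auto
  then show ?thesis by auto
qed

lemma mv_single: "mv_acc p {i} = p i"
proof -
  have "mv_acc p {i} = (\<Sum>I\<in>{I. I \<subseteq> {i} \<and> card I = 1}. (\<Prod>i\<in>I. p i) * (\<Prod>j\<in>{i} - I. 1 - p j))"
    unfolding mv_acc_def by simp
  also have "\<dots> = p i" unfolding subsets_card1_single by simp
  finally show ?thesis .
qed

definition pp :: "nat \<Rightarrow> real" where "pp i = (if i = 1 then 1 else 1/2)"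
definition tt :: "nat \<Rightarrow> real" where "tt i = (if i = 1 then 1 else 1/4)"

lemma set12: "{1..2::nat} = {1,2}" by auto

lemma sum12: "sum tt {1..2} = 5/4"
proof -
  have "sum tt {1..2} = sum tt {1,2}" by (rule arg_cong[where f="sum tt"]) auto
  then show ?thesis by (simp add: tt_def)
qed

lemma ph1_single: "phase1 pp tt 1 {2} S \<Longrightarrow> S = {2}"
  by (erule phase1.cases) auto

lemma ph1:
  assumes "phase1 pp tt 1 {1..2} S" shows "S = {2}"
  using assms
proof cases
  case p1_stop
  moreover have "1 < sum tt {1..2}" by (simp only: sum12)
  moreover have "1 < card {1..2::nat}" by simp
  ultimately show ?thesis by blast
next
  case (p1_step i)
  have "i = 1"
  proof (rule ccontr)
    assume "i \<noteq> 1"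
    have "i \<in> {1..2}" "\<forall>j\<in>{1..2}. usefulness pp tt i \<le> usefulness pp tt j"
      using p1_step(3) unfolding min_useful_def by auto
    moreover have "(1::nat) \<in> {1..2}" by simp
    ultimately have "i = 2" "usefulness pp tt i \<le> usefulness pp tt 1"
      using \<open>i \<noteq> 1\<close> by auto
    then show False by (simp add: usefulness_def pp_def tt_def)
  qed
  then have "{1..2} - {i} = {2::nat}" by auto
  with p1_step(4) show ?thesis using ph1_single by metis
qed

lemma ph2:
  assumes "phase2 pp tt {2} S" shows "S = {2}"
  using assms
proof cases
  case p2_stop then show ?thesis by simp
next
  case (p2_step i) then show ?thesis by simp
qed

lemma ph1_ex: "phase1 pp tt 1 {1..2} {2}"
proof (rule p1_step[where i = 1])
  show "1 < sum tt {1..2}" by (simp only: sum12)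
  show "1 < card {1..2::nat}" by simp
  show "min_useful pp tt {1..2} 1"
    unfolding min_useful_def usefulness_def pp_def tt_def by simp
  have "{1..2} - {1} = {2::nat}" by auto
  moreover have "phase1 pp tt 1 {2} {2}" by (rule p1_stop) simp
  ultimately show "phase1 pp tt 1 ({1..2} - {1}) {2}" by simp
qed

lemma ph2_ex: "phase2 pp tt {2} {2}" by (rule p2_stop) simp

theorem proposition3:
  fixes \<delta> :: real
  assumes "\<delta> > 0"
  shows "\<exists>(n::nat) (p::nat \<Rightarrow> real) (t::nat \<Rightarrow> real) (T::real).
           n \<ge> 1 \<and> (\<forall>i\<in>{1..n}. 0 \<le> p i \<and> p i \<le> 1 \<and> t i > 0) \<and> T > 0 \<and>
           (\<exists>S. greedy_output n p t T S) \<and>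
           (\<forall>S. greedy_output n p t T S \<longrightarrow> mv_acc p S \<le> 1/2 + \<delta>) \<and>
           (\<exists>L. L \<subseteq> {1..n} \<and> L \<noteq> {} \<and> sum t L \<le> T \<and> mv_acc p L \<ge> 1 - \<delta>)"
proof (intro exI conjI)
  show "(2::nat) \<ge> 1" by simp
  show "\<forall>i\<in>{1..2}. 0 \<le> pp i \<and> pp i \<le> 1 \<and> tt i > 0" by (auto simp: pp_def tt_def)
  show "(1::real) > 0" by simp
  show "greedy_output 2 pp tt 1 {2}"
    unfolding greedy_output_def using ph1_ex ph2_ex by blast
  show "\<forall>S. greedy_output 2 pp tt 1 S \<longrightarrow> mv_acc pp S \<le> 1/2 + \<delta>"
  proof (intro allI impI)
    fix S assume "greedy_output 2 pp tt 1 S"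
    then obtain S1 where "phase1 pp tt 1 {1..2} S1" "phase2 pp tt S1 S"
      unfolding greedy_output_def by blast
    then have "S = {2}" using ph1 ph2 by blast
    then show "mv_acc pp S \<le> 1/2 + \<delta>" using assms by (simp add: mv_single pp_def)
  qed
  show "{1} \<subseteq> {1..2::nat}" by simp
  show "{1::nat} \<noteq> {}" by simp
  show "sum tt {1} \<le> 1" by (simp add: tt_def)
  show "mv_acc pp {1} \<ge> 1 - \<delta>" using assms by (simp add: mv_single pp_def)
qed

end
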